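(* Let $\gamma\subset\mathbb{R}^D$ be an irreducible real algebraic curve of constant degree, let $\alpha(t)=(t,\alpha_2(t),\ldots,\alpha_D(t))$, $t\in(0,1)$, be a real-analytic parametrization of a relatively open connected arc of $\gamma$, let $\rho(x,y)=(x-y)^2+\sum_{i=2}^D(\alpha_i(x)-\alpha_i(y))^2$, and let $T:(0,1)^4\to\mathbb{R}^4$, $T(x,x',y,y')=(\rho(x,y),\rho(x,y'),\rho(x',y),\rho(x',y'))$, with Jacobian matrix $J_T$. If $\det J_T\equiv 0$ on $(0,1)^4$, then there exist an open interval $I\subset(0,1)$ and univariate invertible real-analytic functions $\varphi$, defined on $I$, and $h$, defined on $J:=\varphi(I)-\varphi(I)=\{\varphi(x)-\varphi(y):x,y\in I\}$, such that $\rho(x,y)=h(\varphi(x)-\varphi(y))$ for all $x,y\in I$.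
   Context: A curve $\gamma\subset\mathbb{R}^D$ means $\gamma=\gamma_{\mathbb{C}}\cap\mathbb{R}^D$, where $\gamma_{\mathbb{C}}$ is a one-dimensional irreducible algebraic curve in $\mathbb{C}^D$ which is the zero set of a system of exactly $D-1$ polynomials with real coefficients. $\rho(x,y)$ is the squared Euclidean distance between $\alpha(x)$ and $\alpha(y)$. *)

theory Defs
  imports "HOL-Analysis.Analysis"
begin

text \<open>Multivariate polynomials in the variables z_0,...,z_(D-1), represented by their
  coefficient function on exponent vectors (finite support, exponents zero beyond D).\<close>

definition is_mpoly :: "nat \<Rightarrow> ((nat \<Rightarrow> nat) \<Rightarrow> 'a::zero) \<Rightarrow> bool" where
  "is_mpoly D p \<longleftrightarrow> finite {m. p m \<noteq> 0} \<and> (\<forall>m. p m \<noteq> 0 \<longrightarrow> (\<forall>i\<ge>D. m i = 0))"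

definition mpoly_eval :: "nat \<Rightarrow> ((nat \<Rightarrow> nat) \<Rightarrow> complex) \<Rightarrow> (nat \<Rightarrow> complex) \<Rightarrow> complex" where
  "mpoly_eval D p z = (\<Sum>m\<in>{m. p m \<noteq> 0}. p m * (\<Prod>i<D. z i ^ m i))"

definition CD :: "nat \<Rightarrow> (nat \<Rightarrow> complex) set" where
  "CD D = {z. \<forall>i\<ge>D. z i = 0}"

definition zero_set :: "nat \<Rightarrow> ((nat \<Rightarrow> nat) \<Rightarrow> complex) set \<Rightarrow> (nat \<Rightarrow> complex) set" where
  "zero_set D F = {z \<in> CD D. \<forall>p\<in>F. mpoly_eval D p z = 0}"

definition alg_set :: "nat \<Rightarrow> (nat \<Rightarrow> complex) set \<Rightarrow> bool" where
  "alg_set D V \<longleftrightarrow> (\<exists>F. finite F \<and> (\<forall>p\<in>F. is_mpoly D p) \<and> V = zero_set D F)"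

definition irreducible_alg :: "nat \<Rightarrow> (nat \<Rightarrow> complex) set \<Rightarrow> bool" where
  "irreducible_alg D V \<longleftrightarrow> alg_set D V \<and> V \<noteq> {} \<and>
     (\<forall>A B. alg_set D A \<and> alg_set D B \<and> V = A \<union> B \<longrightarrow> V = A \<or> V = B)"

text \<open>Dimension one (Krull dimension of the irreducible algebraic set V): the longest
  chain of irreducible algebraic subsets ending at V has length exactly 1.\<close>
definition dim_one :: "nat \<Rightarrow> (nat \<Rightarrow> complex) set \<Rightarrow> bool" where
  "dim_one D V \<longleftrightarrow> (\<exists>W. irreducible_alg D W \<and> W \<subset> V) \<and>
     \<not> (\<exists>W1 W2. irreducible_alg D W1 \<and> irreducible_alg D W2 \<and> W1 \<subset> W2 \<and> W2 \<subset> V)"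

definition real_alg_curve :: "nat \<Rightarrow> (nat \<Rightarrow> real) set \<Rightarrow> bool" where
  "real_alg_curve D \<gamma> \<longleftrightarrow> (\<exists>P :: nat \<Rightarrow> (nat \<Rightarrow> nat) \<Rightarrow> complex. \<exists>\<gamma>C.
      (\<forall>j<D-1. is_mpoly D (P j) \<and> (\<forall>m. P j m \<in> \<real>)) \<and>
      \<gamma>C = zero_set D (P ` {..<D-1}) \<and>
      irreducible_alg D \<gamma>C \<and> dim_one D \<gamma>C \<and>
      \<gamma> = {x. (\<lambda>i. complex_of_real (x i)) \<in> \<gamma>C})"

definition real_analytic_on :: "real set \<Rightarrow> (real \<Rightarrow> real) \<Rightarrow> bool" where
  "real_analytic_on S f \<longleftrightarrow> (\<forall>x\<in>S. \<exists>r>0. \<exists>c::nat \<Rightarrow> real.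
      \<forall>y. \<bar>y - x\<bar> < r \<longrightarrow> (\<lambda>n. c n * (y - x) ^ n) sums f y)"

definition rho :: "nat \<Rightarrow> (real \<Rightarrow> nat \<Rightarrow> real) \<Rightarrow> real \<Rightarrow> real \<Rightarrow> real" where
  "rho D \<alpha> x y = (\<Sum>i<D. (\<alpha> x i - \<alpha> y i)^2)"

definition Tmap :: "nat \<Rightarrow> (real \<Rightarrow> nat \<Rightarrow> real) \<Rightarrow> real^4 \<Rightarrow> real^4" where
  "Tmap D \<alpha> p = vector [rho D \<alpha> (p$1) (p$3), rho D \<alpha> (p$1) (p$4),
                         rho D \<alpha> (p$2) (p$3), rho D \<alpha> (p$2) (p$4)]"

end

theory Submission
  imports Defs "HOL-Complex_Analysis.Complex_Analysis"
begin

unbundle no Formal_Power_Series.fps_syntax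


definition R1 :: "nat \<Rightarrow> (real \<Rightarrow> nat \<Rightarrow> real) \<Rightarrow> (nat \<Rightarrow> real \<Rightarrow> real) \<Rightarrow> real \<Rightarrow> real \<Rightarrow> real" where
  "R1 D \<alpha> f' x y = (\<Sum>i<D. 2 * (\<alpha> x i - \<alpha> y i) * f' i x)"
definition R2 :: "nat \<Rightarrow> (real \<Rightarrow> nat \<Rightarrow> real) \<Rightarrow> (nat \<Rightarrow> real \<Rightarrow> real) \<Rightarrow> real \<Rightarrow> real \<Rightarrow> real" where
  "R2 D \<alpha> f' x y = (\<Sum>i<D. - 2 * (\<alpha> x i - \<alpha> y i) * f' i y)"

lemma comp_deriv:
  assumes "((\<lambda>t. \<alpha> t i) has_real_derivative d) (at (p$j))"
  shows "((\<lambda>p::real^4. \<alpha> (p$j) i) has_derivative (\<lambda>w. d * w$j)) (at p)"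
proof -
  have "((\<lambda>p::real^4. p$j) has_derivative (\<lambda>w. w$j)) (at p)"
    by (rule bounded_linear_imp_has_derivative[OF bounded_linear_vec_nth])
  moreover have "((\<lambda>t. \<alpha> t i) has_derivative (\<lambda>h. d * h)) (at (p$j))"
    using has_field_derivative_imp_has_derivative[OF assms] by simp
  ultimately show ?thesis using has_derivative_compose[of "\<lambda>p::real^4. p$j" "\<lambda>w. w$j" p UNIV "\<lambda>t. \<alpha> t i" "\<lambda>h. d * h"]
    by simp
qed

lemma rho_deriv:
  assumes der: "\<And>i t. i < D \<Longrightarrow> t \<in> {0<..<1} \<Longrightarrow> ((\<lambda>t. \<alpha> t i) has_real_derivative f' i t) (at t)"
    and pj: "p$j \<in> {0<..<1}" and pk: "p$k \<in> {0<..<1}"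
  shows "((\<lambda>p::real^4. rho D \<alpha> (p$j) (p$k)) has_derivative
          (\<lambda>w. R1 D \<alpha> f' (p$j) (p$k) * w$j + R2 D \<alpha> f' (p$j) (p$k) * w$k)) (at p)"
proof -
  have "((\<lambda>p::real^4. \<Sum>i<D. (\<alpha> (p$j) i - \<alpha> (p$k) i)^2) has_derivative
     (\<lambda>w. \<Sum>i<D. 2 * (\<alpha> (p$j) i - \<alpha> (p$k) i) * (f' i (p$j) * w$j - f' i (p$k) * w$k))) (at p)"
  proof (rule has_derivative_sum)
    fix i assume "i \<in> {..<D}"
    then have i: "i < D" by simp
    have a: "((\<lambda>p::real^4. \<alpha> (p$j) i) has_derivative (\<lambda>w. f' i (p$j) * w$j)) (at p)"
      by (rule comp_deriv) (use der[OF i pj] in simp)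
    have b: "((\<lambda>p::real^4. \<alpha> (p$k) i) has_derivative (\<lambda>w. f' i (p$k) * w$k)) (at p)"
      by (rule comp_deriv) (use der[OF i pk] in simp)
    show "((\<lambda>p::real^4. (\<alpha> (p$j) i - \<alpha> (p$k) i)^2) has_derivative
     (\<lambda>w. 2 * (\<alpha> (p$j) i - \<alpha> (p$k) i) * (f' i (p$j) * w$j - f' i (p$k) * w$k))) (at p)"
      using has_derivative_power[OF has_derivative_diff[OF a b], of 2]
      by (simp add: power2_eq_square algebra_simps)
  qed
  moreover have "(\<lambda>w. \<Sum>i<D. 2 * (\<alpha> (p$j) i - \<alpha> (p$k) i) * (f' i (p$j) * w$j - f' i (p$k) * w$k))
     = (\<lambda>w. R1 D \<alpha> f' (p$j) (p$k) * w$j + R2 D \<alpha> f' (p$j) (p$k) * w$k)"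
  proof
    fix w :: "real^4"
    show "(\<Sum>i<D. 2 * (\<alpha> (p$j) i - \<alpha> (p$k) i) * (f' i (p$j) * w$j - f' i (p$k) * w$k))
     = R1 D \<alpha> f' (p$j) (p$k) * w$j + R2 D \<alpha> f' (p$j) (p$k) * w$k"
      unfolding R1_def R2_def sum_distrib_right sum.distrib[symmetric]
      by (rule sum.cong) (auto simp: algebra_simps)
  qed
  ultimately show ?thesis
    unfolding rho_def by simp
qed

lemma vector4 [simp]:
  "(vector [a,b,c,d] :: ('a::zero)^4) $ 1 = a" "(vector [a,b,c,d] :: ('a::zero)^4) $ 2 = b"
  "(vector [a,b,c,d] :: ('a::zero)^4) $ 3 = c" "(vector [a,b,c,d] :: ('a::zero)^4) $ 4 = d"
  unfolding vector_def by simp_all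

lemma Tmap_deriv:
  assumes der: "\<And>i t. i < D \<Longrightarrow> t \<in> {0<..<1} \<Longrightarrow> ((\<lambda>t. \<alpha> t i) has_real_derivative f' i t) (at t)"
    and p: "\<forall>k. p$k \<in> {0<..<1}"
  shows "(Tmap D \<alpha> has_derivative (\<lambda>w. vector
     [R1 D \<alpha> f' (p$1) (p$3) * w$1 + R2 D \<alpha> f' (p$1) (p$3) * w$3,
      R1 D \<alpha> f' (p$1) (p$4) * w$1 + R2 D \<alpha> f' (p$1) (p$4) * w$4,
      R1 D \<alpha> f' (p$2) (p$3) * w$2 + R2 D \<alpha> f' (p$2) (p$3) * w$3,
      R1 D \<alpha> f' (p$2) (p$4) * w$2 + R2 D \<alpha> f' (p$2) (p$4) * w$4])) (at p)"
proof -
  have pin: "\<And>j. p$j \<in> {0<..<1}" by (rule spec[OF p])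
  have rd: "\<And>j k. ((\<lambda>p::real^4. rho D \<alpha> (p$j) (p$k)) has_derivative
          (\<lambda>w. R1 D \<alpha> f' (p$j) (p$k) * w$j + R2 D \<alpha> f' (p$j) (p$k) * w$k)) (at p)"
    by (rule rho_deriv[OF der pin pin])
  show ?thesis
  proof (rule has_derivative_componentwise_within[THEN iffD2], rule ballI)
    fix b :: "real^4" assume "b \<in> Basis"
    then obtain k where b: "b = axis k 1" by (auto simp: Basis_vec_def)
    have "k = 1 \<or> k = 2 \<or> k = 3 \<or> k = 4" by (rule exhaust_4)
    moreover note rd[of 1 3] rd[of 1 4] rd[of 2 3] rd[of 2 4]
    ultimately show "((\<lambda>x. Tmap D \<alpha> x \<bullet> b) has_derivative (\<lambda>x. vector
     [R1 D \<alpha> f' (p$1) (p$3) * x$1 + R2 D \<alpha> f' (p$1) (p$3) * x$3,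
      R1 D \<alpha> f' (p$1) (p$4) * x$1 + R2 D \<alpha> f' (p$1) (p$4) * x$4,
      R1 D \<alpha> f' (p$2) (p$3) * x$2 + R2 D \<alpha> f' (p$2) (p$3) * x$3,
      R1 D \<alpha> f' (p$2) (p$4) * x$2 + R2 D \<alpha> f' (p$2) (p$4) * x$4] \<bullet> b)) (at p)"
      unfolding b inner_axis Tmap_def by (elim disjE) simp_all
  qed
qed

lemma det_alg1:
  fixes a b c d e f g k w x y z :: real
  assumes e1: "a*w + b*y = 0" and e2: "c*w + d*z = 0" and e3: "e*x + f*y = 0" and e4: "g*x + k*z = 0"
  shows "(b*c*e*k - a*d*f*g) * w = 0"
proof -
  have e1': "a*w = - (b*y)" using e1 by linarith
  have e2': "d*z = - (c*w)" using e2 by linarith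
  have e3': "f*y = - (e*x)" using e3 by linarith
  have e4': "g*x = - (k*z)" using e4 by linarith
  have "a*d*f*g*w = d*f*g*(a*w)" by (simp add: algebra_simps)
  also have "\<dots> = - (b*d*g*(f*y))" unfolding e1' by (simp add: algebra_simps)
  also have "\<dots> = b*d*e*(g*x)" unfolding e3' by (simp add: algebra_simps)
  also have "\<dots> = - (b*e*k*(d*z))" unfolding e4' by (simp add: algebra_simps)
  also have "\<dots> = b*e*k*(c*w)" unfolding e2' by (simp add: algebra_simps)
  finally have F: "a*d*f*g*w = b*c*e*k*w" by (simp add: algebra_simps)
  show ?thesis by (simp add: left_diff_distrib F)
qed

lemma det_alg:
  fixes a b c d e f g k w x y z :: real
  assumes e1: "a*w + b*y = 0" and e2: "c*w + d*z = 0" and e3: "e*x + f*y = 0" and e4: "g*x + k*z = 0"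
  shows "(b*c*e*k - a*d*f*g) * w = 0" "(b*c*e*k - a*d*f*g) * x = 0"
        "(b*c*e*k - a*d*f*g) * y = 0" "(b*c*e*k - a*d*f*g) * z = 0"
proof -
  show "(b*c*e*k - a*d*f*g) * w = 0" by (rule det_alg1[OF assms])
  have "(k*e*c*b - g*f*d*a) * x = 0"
    by (rule det_alg1[where ?a=g and ?b=k and ?c=e and ?d=f and ?e=c and ?f=d and ?g=a and ?k=b and ?w=x and ?x=w and ?y=z and ?z=y]) (use assms in \<open>simp_all add: algebra_simps\<close>)
  then show "(b*c*e*k - a*d*f*g) * x = 0" by (simp add: algebra_simps)
  have "(a*f*d*g - b*e*c*k) * y = 0"
    by (rule det_alg1[where ?a=b and ?b=a and ?c=f and ?d=e and ?e=d and ?f=c and ?g=k and ?k=g and ?w=y and ?x=z and ?y=w and ?z=x]) (use assms in \<open>simp_all add: algebra_simps\<close>)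
  moreover have "(a*f*d*g - b*e*c*k) * y = - ((b*c*e*k - a*d*f*g) * y)" by (simp add: algebra_simps)
  ultimately show "(b*c*e*k - a*d*f*g) * y = 0" by simp
  have "(g*d*f*a - k*c*e*b) * z = 0"
    by (rule det_alg1[where ?a=k and ?b=g and ?c=d and ?d=c and ?e=f and ?f=e and ?g=b and ?k=a and ?w=z and ?x=y and ?y=x and ?z=w]) (use assms in \<open>simp_all add: algebra_simps\<close>)
  moreover have "(g*d*f*a - k*c*e*b) * z = - ((b*c*e*k - a*d*f*g) * z)" by (simp add: algebra_simps)
  ultimately show "(b*c*e*k - a*d*f*g) * z = 0" by simp
qed

lemma det_identity:
  assumes der: "\<And>i t. i < D \<Longrightarrow> t \<in> {0<..<1} \<Longrightarrow> ((\<lambda>t. \<alpha> t i) has_real_derivative f' i t) (at t)"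
    and det0: "\<forall>p. (\<forall>k. p$k \<in> {0<..<1}) \<longrightarrow> det (jacobian (Tmap D \<alpha>) (at p)) = 0"
    and x: "x \<in> {0<..<1}" and x': "x' \<in> {0<..<1}" and y: "y \<in> {0<..<1}" and y': "y' \<in> {0<..<1}"
  shows "R2 D \<alpha> f' x y * R1 D \<alpha> f' x y' * R1 D \<alpha> f' x' y * R2 D \<alpha> f' x' y'
       = R1 D \<alpha> f' x y * R2 D \<alpha> f' x y' * R2 D \<alpha> f' x' y * R1 D \<alpha> f' x' y'"
proof -
  define p :: "real^4" where "p = vector [x, x', y, y']"
  have pc: "p$1 = x" "p$2 = x'" "p$3 = y" "p$4 = y'" by (simp_all add: p_def)
  have p: "\<forall>k. p$k \<in> {0<..<1}"
    using x x' y y' pc by (metis exhaust_4)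
  define L where "L = (\<lambda>w::real^4. vector
     [R1 D \<alpha> f' (p$1) (p$3) * w$1 + R2 D \<alpha> f' (p$1) (p$3) * w$3,
      R1 D \<alpha> f' (p$1) (p$4) * w$1 + R2 D \<alpha> f' (p$1) (p$4) * w$4,
      R1 D \<alpha> f' (p$2) (p$3) * w$2 + R2 D \<alpha> f' (p$2) (p$3) * w$3,
      R1 D \<alpha> f' (p$2) (p$4) * w$2 + R2 D \<alpha> f' (p$2) (p$4) * w$4] :: real^4)"
  have hd: "(Tmap D \<alpha> has_derivative L) (at p)"
    unfolding L_def by (rule Tmap_deriv[OF der p])
  have lin: "linear L"
    using has_derivative_bounded_linear[OF hd] bounded_linear.linear by blast
  have "det (matrix L) = 0"
    using det0 p frechet_derivative_at[OF hd] by (simp add: jacobian_def)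
  then have "\<not> inj L" using det_nz_iff_inj[OF lin] by simp
  then obtain v where v: "L v = 0" "v \<noteq> 0" using linear_injective_0[OF lin] by blast
  have eqs: "L v $ 1 = 0" "L v $ 2 = 0" "L v $ 3 = 0" "L v $ 4 = 0" using v by simp_all
  have eqs': "R1 D \<alpha> f' x y * v$1 + R2 D \<alpha> f' x y * v$3 = 0"
     "R1 D \<alpha> f' x y' * v$1 + R2 D \<alpha> f' x y' * v$4 = 0"
     "R1 D \<alpha> f' x' y * v$2 + R2 D \<alpha> f' x' y * v$3 = 0"
     "R1 D \<alpha> f' x' y' * v$2 + R2 D \<alpha> f' x' y' * v$4 = 0"
    using eqs by (simp_all add: L_def pc)
  obtain j where j: "v$j \<noteq> 0" using v(2) by (metis vec_eq_iff zero_index)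
  have "j = 1 \<or> j = 2 \<or> j = 3 \<or> j = 4" by (rule exhaust_4)
  then show ?thesis
    using det_alg[OF eqs'] j by (auto simp: algebra_simps)
qed



definition cext :: "(real \<Rightarrow> real) \<Rightarrow> real \<Rightarrow> bool" where
  "cext f x \<longleftrightarrow> (\<exists>r>0. \<exists>F. F holomorphic_on ball (complex_of_real x) r \<and>
      (\<forall>y. \<bar>y - x\<bar> < r \<longrightarrow> F (complex_of_real y) = complex_of_real (f y)))"

lemma dist_of_real_ball: "complex_of_real y \<in> ball (complex_of_real x) r \<longleftrightarrow> \<bar>y - x\<bar> < r"
  by (simp add: dist_real_def abs_minus_commute)

lemma ra_imp_cext:
  assumes "real_analytic_on S f" "x \<in> S"
  shows "cext f x"
proof -
  obtain r c where r: "r > 0" and c: "\<And>y. \<bar>y - x\<bar> < r \<Longrightarrow> (\<lambda>n. c n * (y - x) ^ n) sums f y"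
    using assms unfolding real_analytic_on_def by blast
  define F where "F = (\<lambda>z. \<Sum>n. complex_of_real (c n) * (z - complex_of_real x) ^ n)"
  have sm: "(\<lambda>n. complex_of_real (c n) * (w - complex_of_real x) ^ n) sums F w"
    if w: "w \<in> ball (complex_of_real x) r" for w
  proof -
    define t where "t = (norm (w - complex_of_real x) + r) / 2"
    have t: "norm (w - complex_of_real x) < t" "t < r"
      using w by (auto simp: t_def dist_norm norm_minus_commute)
    have "summable (\<lambda>n. c n * t ^ n)"
      using c[of "x + t"] t norm_ge_zero[of "w - complex_of_real x"] by (auto simp: sums_iff)
    then have "summable (\<lambda>n. complex_of_real (c n * t ^ n))"
      by (simp only: summable_of_real_iff)
    then have "summable (\<lambda>n. complex_of_real (c n) * complex_of_real t ^ n)"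
      by simp
    then have "summable (\<lambda>n. norm (complex_of_real (c n) * (w - complex_of_real x) ^ n))"
      by (rule powser_insidea) (use t norm_ge_zero[of "w - complex_of_real x"] in simp)
    then have "summable (\<lambda>n. complex_of_real (c n) * (w - complex_of_real x) ^ n)"
      by (rule summable_norm_cancel)
    then show ?thesis unfolding F_def by (rule summable_sums)
  qed
  have hol: "F holomorphic_on ball (complex_of_real x) r"
    by (rule power_series_holomorphic) (rule sm)
  have eq: "F (complex_of_real y) = complex_of_real (f y)" if "\<bar>y - x\<bar> < r" for y
  proof -
    have "(\<lambda>n. complex_of_real (c n * (y - x) ^ n)) sums complex_of_real (f y)"
      using sums_of_real[OF c[OF that]] .
    then have "(\<lambda>n. complex_of_real (c n) * (complex_of_real y - complex_of_real x) ^ n) sums complex_of_real (f y)"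
      by simp
    moreover have "(\<lambda>n. complex_of_real (c n) * (complex_of_real y - complex_of_real x) ^ n) sums F (complex_of_real y)"
      by (rule sm) (rule dist_of_real_ball[THEN iffD2, OF that])
    ultimately show ?thesis using sums_unique2 by blast
  qed
  show ?thesis unfolding cext_def
    by (rule exI[of _ r], intro conjI r exI[of _ F] hol allI impI eq)
qed

lemma cext_imp_ra:
  assumes "\<And>x. x \<in> S \<Longrightarrow> cext f x"
  shows "real_analytic_on S f"
  unfolding real_analytic_on_def
proof
  fix x assume "x \<in> S"
  then obtain r F where r: "r > 0" and hol: "F holomorphic_on ball (complex_of_real x) r"
    and eq: "\<And>y. \<bar>y - x\<bar> < r \<Longrightarrow> F (complex_of_real y) = complex_of_real (f y)"
    using assms unfolding cext_def by blast
  define a where "a = (\<lambda>n. (deriv ^^ n) F (complex_of_real x) / fact n)"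
  have "(\<lambda>n. Re (a n) * (y - x) ^ n) sums f y" if y: "\<bar>y - x\<bar> < r" for y
  proof -
    have "(\<lambda>n. a n * (complex_of_real y - complex_of_real x) ^ n) sums F (complex_of_real y)"
      unfolding a_def by (rule holomorphic_power_series[OF hol]) (rule dist_of_real_ball[THEN iffD2, OF y])
    then have "(\<lambda>n. Re (a n * (complex_of_real y - complex_of_real x) ^ n)) sums Re (F (complex_of_real y))"
      by (simp add: sums_complex_iff)
    moreover have "\<And>n. Re (a n * (complex_of_real y - complex_of_real x) ^ n) = Re (a n) * (y - x) ^ n"
      by (simp flip: of_real_diff of_real_power)
    ultimately show ?thesis using eq[OF y] by simp
  qed
  then show "\<exists>r>0. \<exists>c. \<forall>y. \<bar>y - x\<bar> < r \<longrightarrow> (\<lambda>n. c n * (y - x) ^ n) sums f y"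
    by (intro exI[of _ r] conjI r exI[of _ "\<lambda>n. Re (a n)"] allI impI)
qed

lemma cextI:
  assumes "r > 0" "F holomorphic_on ball (complex_of_real x) r"
    "\<And>y. \<bar>y - x\<bar> < r \<Longrightarrow> F (complex_of_real y) = complex_of_real (f y)"
  shows "cext f x"
  unfolding cext_def by (rule exI[of _ r], intro conjI assms exI[of _ F] allI impI)

lemma cextE:
  assumes "cext f x"
  obtains r F where "r > 0" "F holomorphic_on ball (complex_of_real x) r"
    "\<And>y. \<bar>y - x\<bar> < r \<Longrightarrow> F (complex_of_real y) = complex_of_real (f y)"
  using assms unfolding cext_def by blast

lemma cext_const: "cext (\<lambda>y. c) x"
  by (rule cextI[of 1 "\<lambda>z. complex_of_real c"]) auto

lemma cext_id: "cext (\<lambda>y. y) x"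
  by (rule cextI[of 1 "\<lambda>z. z"]) auto

lemma cext_add:
  assumes "cext f x" "cext g x" shows "cext (\<lambda>y. f y + g y) x"
proof -
  obtain r1 F where 1: "r1 > 0" "F holomorphic_on ball (complex_of_real x) r1"
    "\<And>y. \<bar>y - x\<bar> < r1 \<Longrightarrow> F (complex_of_real y) = complex_of_real (f y)" using cextE[OF assms(1)] by blast
  obtain r2 G where 2: "r2 > 0" "G holomorphic_on ball (complex_of_real x) r2"
    "\<And>y. \<bar>y - x\<bar> < r2 \<Longrightarrow> G (complex_of_real y) = complex_of_real (g y)" using cextE[OF assms(2)] by blast
  show ?thesis
  proof (rule cextI[of "min r1 r2" "\<lambda>z. F z + G z"])
    show "(\<lambda>z. F z + G z) holomorphic_on ball (complex_of_real x) (min r1 r2)"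
      by (intro holomorphic_intros holomorphic_on_subset[OF 1(2)] holomorphic_on_subset[OF 2(2)]) auto
  qed (use 1 2 in auto)
qed

lemma cext_diff:
  assumes "cext f x" "cext g x" shows "cext (\<lambda>y. f y - g y) x"
proof -
  obtain r1 F where 1: "r1 > 0" "F holomorphic_on ball (complex_of_real x) r1"
    "\<And>y. \<bar>y - x\<bar> < r1 \<Longrightarrow> F (complex_of_real y) = complex_of_real (f y)" using cextE[OF assms(1)] by blast
  obtain r2 G where 2: "r2 > 0" "G holomorphic_on ball (complex_of_real x) r2"
    "\<And>y. \<bar>y - x\<bar> < r2 \<Longrightarrow> G (complex_of_real y) = complex_of_real (g y)" using cextE[OF assms(2)] by blast
  show ?thesis
  proof (rule cextI[of "min r1 r2" "\<lambda>z. F z - G z"])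
    show "(\<lambda>z. F z - G z) holomorphic_on ball (complex_of_real x) (min r1 r2)"
      by (intro holomorphic_intros holomorphic_on_subset[OF 1(2)] holomorphic_on_subset[OF 2(2)]) auto
  qed (use 1 2 in auto)
qed

lemma cext_mult:
  assumes "cext f x" "cext g x" shows "cext (\<lambda>y. f y * g y) x"
proof -
  obtain r1 F where 1: "r1 > 0" "F holomorphic_on ball (complex_of_real x) r1"
    "\<And>y. \<bar>y - x\<bar> < r1 \<Longrightarrow> F (complex_of_real y) = complex_of_real (f y)" using cextE[OF assms(1)] by blast
  obtain r2 G where 2: "r2 > 0" "G holomorphic_on ball (complex_of_real x) r2"
    "\<And>y. \<bar>y - x\<bar> < r2 \<Longrightarrow> G (complex_of_real y) = complex_of_real (g y)" using cextE[OF assms(2)] by blast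
  show ?thesis
  proof (rule cextI[of "min r1 r2" "\<lambda>z. F z * G z"])
    show "(\<lambda>z. F z * G z) holomorphic_on ball (complex_of_real x) (min r1 r2)"
      by (intro holomorphic_intros holomorphic_on_subset[OF 1(2)] holomorphic_on_subset[OF 2(2)]) auto
  qed (use 1 2 in auto)
qed

lemma cext_sum:
  fixes n :: nat
  assumes "\<And>i. i < n \<Longrightarrow> cext (f i) x"
  shows "cext (\<lambda>y. \<Sum>i<n. f i y) x"
  using assms
proof (induction n)
  case 0 then show ?case using cext_const[of 0 x] by simp
next
  case (Suc n)
  then show ?case by (simp add: cext_add)
qed

lemma holo_cont_at:
  assumes "F holomorphic_on ball z r" "r > 0"
  shows "isCont F z"
  using continuous_on_interior[OF holomorphic_on_imp_continuous_on[OF assms(1)]] assms(2)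
  by (simp add: interior_open)

lemma cext_divide:
  assumes "cext f x" "cext g x" "g x \<noteq> 0" shows "cext (\<lambda>y. f y / g y) x"
proof -
  obtain r1 F where 1: "r1 > 0" "F holomorphic_on ball (complex_of_real x) r1"
    "\<And>y. \<bar>y - x\<bar> < r1 \<Longrightarrow> F (complex_of_real y) = complex_of_real (f y)" using cextE[OF assms(1)] by blast
  obtain r2 G where 2: "r2 > 0" "G holomorphic_on ball (complex_of_real x) r2"
    "\<And>y. \<bar>y - x\<bar> < r2 \<Longrightarrow> G (complex_of_real y) = complex_of_real (g y)" using cextE[OF assms(2)] by blast
  have "G (complex_of_real x) \<noteq> 0" using 2(3)[of x] 2(1) assms(3) by simp
  then obtain e where e: "e > 0" "\<And>z. dist (complex_of_real x) z < e \<Longrightarrow> G z \<noteq> 0"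
    using continuous_at_avoid[OF holo_cont_at[OF 2(2,1)]] by blast
  show ?thesis
  proof (rule cextI[of "min e (min r1 r2)" "\<lambda>z. F z / G z"])
    show "(\<lambda>z. F z / G z) holomorphic_on ball (complex_of_real x) (min e (min r1 r2))"
      by (intro holomorphic_intros holomorphic_on_subset[OF 1(2)] holomorphic_on_subset[OF 2(2)]) (use e(2) in fastforce)+
  qed (use 1 2 e in auto)
qed

lemma cext_compose:
  assumes "cext g (f x)" "cext f x" shows "cext (\<lambda>y. g (f y)) x"
proof -
  obtain r1 F where 1: "r1 > 0" "F holomorphic_on ball (complex_of_real x) r1"
    "\<And>y. \<bar>y - x\<bar> < r1 \<Longrightarrow> F (complex_of_real y) = complex_of_real (f y)" using cextE[OF assms(2)] by blast
  obtain r2 G where 2: "r2 > 0" "G holomorphic_on ball (complex_of_real (f x)) r2"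
    "\<And>y. \<bar>y - f x\<bar> < r2 \<Longrightarrow> G (complex_of_real y) = complex_of_real (g y)" using cextE[OF assms(1)] by blast
  have Fx: "F (complex_of_real x) = complex_of_real (f x)" using 1 by simp
  obtain d where d: "d > 0" "\<And>z. dist z (complex_of_real x) < d \<Longrightarrow> dist (F z) (F (complex_of_real x)) < r2"
    using holo_cont_at[OF 1(2,1)] 2(1) unfolding continuous_at_eps_delta by blast
  define r where "r = min d r1"
  have r: "r > 0" using d 1 by (simp add: r_def)
  have img: "F ` ball (complex_of_real x) r \<subseteq> ball (complex_of_real (f x)) r2"
    using d(2) by (auto simp: r_def Fx dist_commute)
  show ?thesis
  proof (rule cextI[of r "\<lambda>z. G (F z)"])
    show "(\<lambda>z. G (F z)) holomorphic_on ball (complex_of_real x) r"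
    proof -
      have sub: "ball (complex_of_real x) r \<subseteq> ball (complex_of_real x) r1" unfolding r_def by (rule subset_ball) simp
      show ?thesis using holomorphic_on_compose_gen[OF holomorphic_on_subset[OF 1(2) sub] 2(2) img] by (simp add: o_def)
    qed
  next
    fix y assume y: "\<bar>y - x\<bar> < r"
    then have "F (complex_of_real y) \<in> ball (complex_of_real (f x)) r2"
      using img dist_of_real_ball[of y x r] by blast
    then have "\<bar>f y - f x\<bar> < r2" using 1(3)[of y] y by (simp add: r_def dist_real_def abs_minus_commute)
    then show "G (F (complex_of_real y)) = complex_of_real (g (f y))"
      using 1(3)[of y] y 2(3) by (simp add: r_def)
  qed (rule r)
qed

lemma cext_core:
  assumes r: "r > 0" and hol: "F holomorphic_on ball (complex_of_real x) r"
    and eq: "\<And>y. \<bar>y - x\<bar> < r \<Longrightarrow> F (complex_of_real y) = complex_of_real (f y)"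
    and y: "\<bar>y - x\<bar> < r"
  shows "(f has_real_derivative Re (deriv F (complex_of_real y))) (at y)"
    and "deriv F (complex_of_real y) = complex_of_real (Re (deriv F (complex_of_real y)))"
proof -
  define D where "D = deriv F (complex_of_real y)"
  have d1: "(F has_field_derivative D) (at (complex_of_real y))"
    unfolding D_def by (rule holomorphic_derivI[OF hol open_ball]) (rule dist_of_real_ball[THEN iffD2, OF y])
  have d2: "((\<lambda>t. F (complex_of_real t)) has_vector_derivative D) (at y)"
    using has_vector_derivative_real_field[OF d1] .
  have d3: "((\<lambda>t. complex_of_real (f t)) has_vector_derivative D) (at y)"
  proof (rule has_vector_derivative_transform_within_open[OF d2, of "{x-r<..<x+r}"])
    show "y \<in> {x-r<..<x+r}" using y by (auto simp: abs_less_iff)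
  next
    fix t assume "t \<in> {x-r<..<x+r}"
    then have "\<bar>t - x\<bar> < r" by (auto simp: abs_less_iff)
    then show "F (complex_of_real t) = complex_of_real (f t)" by (rule eq)
  qed simp
  have re: "(f has_real_derivative Re D) (at y)"
    using has_field_derivative_Re[OF d3] by simp
  have im: "((\<lambda>t. 0::real) has_real_derivative Im D) (at y)"
    using has_field_derivative_Im[OF d3] by simp
  have "Im D = 0" using DERIV_unique[OF im DERIV_const] .
  then have "D = complex_of_real (Re D)" by (simp add: complex_eq_iff)
  with re show "(f has_real_derivative Re (deriv F (complex_of_real y))) (at y)"
    and "deriv F (complex_of_real y) = complex_of_real (Re (deriv F (complex_of_real y)))"
    by (simp_all add: D_def)
qed

lemma cext_deriv_at:
  assumes "cext f x" shows "(f has_real_derivative deriv f x) (at x)"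
proof -
  obtain r F where 1: "r > 0" "F holomorphic_on ball (complex_of_real x) r"
    "\<And>y. \<bar>y - x\<bar> < r \<Longrightarrow> F (complex_of_real y) = complex_of_real (f y)" using cextE[OF assms] by blast
  have "(f has_real_derivative Re (deriv F (complex_of_real x))) (at x)"
    using cext_core(1)[OF 1, of x] 1(1) by simp
  then show ?thesis using DERIV_imp_deriv by metis
qed

lemma cext_isCont: "cext f x \<Longrightarrow> isCont f x"
  using cext_deriv_at DERIV_isCont by blast

lemma cext_deriv:
  assumes "cext f x" shows "cext (deriv f) x"
proof -
  obtain r F where 1: "r > 0" "F holomorphic_on ball (complex_of_real x) r"
    "\<And>y. \<bar>y - x\<bar> < r \<Longrightarrow> F (complex_of_real y) = complex_of_real (f y)" using cextE[OF assms] by blast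
  show ?thesis
  proof (rule cextI[of r "deriv F"])
    show "deriv F holomorphic_on ball (complex_of_real x) r"
      by (rule holomorphic_deriv[OF 1(2) open_ball])
  next
    fix y assume y: "\<bar>y - x\<bar> < r"
    have "deriv f y = Re (deriv F (complex_of_real y))"
      using DERIV_imp_deriv[OF cext_core(1)[OF 1 y]] .
    then show "deriv F (complex_of_real y) = complex_of_real (deriv f y)"
      using cext_core(2)[OF 1 y] by simp
  qed (rule 1(1))
qed

lemma cext_near:
  assumes "cext f x" shows "\<exists>e>0. \<forall>y. \<bar>y - x\<bar> < e \<longrightarrow> cext f y"
proof -
  obtain r F where 1: "r > 0" "F holomorphic_on ball (complex_of_real x) r"
    "\<And>y. \<bar>y - x\<bar> < r \<Longrightarrow> F (complex_of_real y) = complex_of_real (f y)" using cextE[OF assms] by blast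
  have "cext f y" if y: "\<bar>y - x\<bar> < r" for y
  proof (rule cextI[of "r - \<bar>y - x\<bar>" F])
    have "ball (complex_of_real y) (r - \<bar>y - x\<bar>) \<subseteq> ball (complex_of_real x) r"
    proof
      fix z assume "z \<in> ball (complex_of_real y) (r - \<bar>y - x\<bar>)"
      then have "dist (complex_of_real y) z < r - \<bar>y - x\<bar>" by simp
      moreover have "dist (complex_of_real x) (complex_of_real y) = \<bar>y - x\<bar>"
        by (simp add: dist_real_def abs_minus_commute)
      ultimately show "z \<in> ball (complex_of_real x) r"
        using dist_triangle[of "complex_of_real x" z "complex_of_real y"] by simp
    qed
    then show "F holomorphic_on ball (complex_of_real y) (r - \<bar>y - x\<bar>)"
      using holomorphic_on_subset[OF 1(2)] by blast
  next
    fix t assume "\<bar>t - y\<bar> < r - \<bar>y - x\<bar>"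
    then have "\<bar>t - x\<bar> < r" by linarith
    then show "F (complex_of_real t) = complex_of_real (f t)" by (rule 1(3))
  qed (use y in simp)
  then show ?thesis using 1(1) by blast
qed

lemma cext_primitive:
  assumes ab: "a < x" "x < b"
    and der: "\<And>y. a < y \<Longrightarrow> y < b \<Longrightarrow> (\<phi> has_real_derivative A y) (at y)"
    and cA: "cext A x"
  shows "cext \<phi> x"
proof -
  obtain r F where 1: "r > 0" "F holomorphic_on ball (complex_of_real x) r"
    "\<And>y. \<bar>y - x\<bar> < r \<Longrightarrow> F (complex_of_real y) = complex_of_real (A y)" using cextE[OF cA] by blast
  define r' where "r' = min r (min (x - a) (b - x))"
  have r': "r' > 0" "r' \<le> r" "r' \<le> x - a" "r' \<le> b - x" using ab 1(1) by (auto simp: r'_def)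
  have sub: "ball (complex_of_real x) r' \<subseteq> ball (complex_of_real x) r" by (rule subset_ball) (rule r'(2))
  have hol': "F holomorphic_on ball (complex_of_real x) r'" by (rule holomorphic_on_subset[OF 1(2) sub])
  obtain P where P: "\<And>z. z \<in> ball (complex_of_real x) r' \<Longrightarrow> (P has_field_derivative F z) (at z within ball (complex_of_real x) r')"
    using holomorphic_convex_primitive'[OF convex_ball open_ball hol'] by blast
  have Pat: "(P has_field_derivative F z) (at z)" if "z \<in> ball (complex_of_real x) r'" for z
    using P[OF that] at_within_open[OF that open_ball] by simp
  define \<Phi> where "\<Phi> = (\<lambda>z. P z - P (complex_of_real x) + complex_of_real (\<phi> x))"
  have \<Phi>d: "(\<Phi> has_field_derivative F z) (at z)" if "z \<in> ball (complex_of_real x) r'" for z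
    unfolding \<Phi>_def using Pat[OF that] by (auto intro!: derivative_eq_intros)
  have hol: "\<Phi> holomorphic_on ball (complex_of_real x) r'"
    unfolding holomorphic_on_open[OF open_ball] using \<Phi>d by blast
  define I where "I = {x - r'<..<x + r'}"
  define g where "g = (\<lambda>t. \<Phi> (complex_of_real t) - complex_of_real (\<phi> t))"
  have gd: "(g has_derivative (\<lambda>h. 0)) (at t within I)" if t: "t \<in> I" for t
  proof -
    have tb: "\<bar>t - x\<bar> < r'" using t by (auto simp: I_def abs_less_iff)
    have "complex_of_real t \<in> ball (complex_of_real x) r'" by (rule dist_of_real_ball[THEN iffD2, OF tb])
    then have d1: "((\<lambda>t. \<Phi> (complex_of_real t)) has_vector_derivative F (complex_of_real t)) (at t)"
      using has_vector_derivative_real_field[OF \<Phi>d] by blast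
    have "F (complex_of_real t) = complex_of_real (A t)" using 1(3)[of t] tb r'(2) by simp
    moreover have "((\<lambda>t. complex_of_real (\<phi> t)) has_vector_derivative complex_of_real (A t)) (at t)"
      by (rule has_vector_derivative_of_real[OF der]) (use tb r' in \<open>auto simp: abs_less_iff\<close>)
    ultimately have "(g has_vector_derivative 0) (at t)"
      unfolding g_def using has_vector_derivative_diff[OF d1] by fastforce
    then show ?thesis
      by (auto simp: has_vector_derivative_def intro: has_derivative_at_withinI)
  qed
  obtain c where c: "\<And>t. t \<in> I \<Longrightarrow> g t = c"
    using has_derivative_zero_constant[of I g] gd by (auto simp: I_def)
  have "g x = 0" by (simp add: g_def \<Phi>_def)
  moreover have "x \<in> I" using r' by (simp add: I_def)
  ultimately have g0: "\<And>t. t \<in> I \<Longrightarrow> g t = 0" using c by metis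
  show ?thesis
  proof (rule cextI[OF r'(1) hol])
    fix y assume "\<bar>y - x\<bar> < r'"
    then have "y \<in> I" by (auto simp: I_def abs_less_iff)
    then show "\<Phi> (complex_of_real y) = complex_of_real (\<phi> y)" using g0[of y] by (simp add: g_def)
  qed
qed

lemma cext_inverse:
  assumes cp: "cext \<phi> x" and dnz: "deriv \<phi> x \<noteq> 0" and e: "e > 0"
    and inv: "\<And>w. \<bar>w - \<phi> x\<bar> < e \<Longrightarrow> \<phi> (\<psi> w) = w"
    and cont: "isCont \<psi> (\<phi> x)" and psx: "\<psi> (\<phi> x) = x"
  shows "cext \<psi> (\<phi> x)"
proof -
  obtain r F where 1: "r > 0" "F holomorphic_on ball (complex_of_real x) r"
    "\<And>y. \<bar>y - x\<bar> < r \<Longrightarrow> F (complex_of_real y) = complex_of_real (\<phi> y)" using cextE[OF cp] by blast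
  have x0: "\<bar>x - x\<bar> < r" using 1(1) by simp
  have "deriv \<phi> x = Re (deriv F (complex_of_real x))"
    using DERIV_imp_deriv[OF cext_core(1)[OF 1 x0]] .
  then have dF: "deriv F (complex_of_real x) = complex_of_real (deriv \<phi> x)"
    using cext_core(2)[OF 1 x0] by simp
  have xin: "complex_of_real x \<in> ball (complex_of_real x) r" using 1(1) by simp
  obtain r1 where r1: "r1 > 0" "ball (complex_of_real x) r1 \<subseteq> ball (complex_of_real x) r"
    "inj_on F (ball (complex_of_real x) r1)"
    using has_complex_derivative_locally_injective[OF 1(2) xin open_ball] dF dnz by auto
  have hol1: "F holomorphic_on ball (complex_of_real x) r1" by (rule holomorphic_on_subset[OF 1(2) r1(2)])
  obtain G where G: "G holomorphic_on (F ` ball (complex_of_real x) r1)"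
    "\<And>z. z \<in> ball (complex_of_real x) r1 \<Longrightarrow> G (F z) = z"
    using holomorphic_has_inverse[OF hol1 open_ball r1(3)] by metis
  have op: "open (F ` ball (complex_of_real x) r1)" by (rule open_mapping_thm3[OF hol1 open_ball r1(3)])
  have "F (complex_of_real x) = complex_of_real (\<phi> x)" using 1(3)[OF x0] .
  moreover have "F (complex_of_real x) \<in> F ` ball (complex_of_real x) r1" using r1(1) by simp
  ultimately obtain e2 where e2: "e2 > 0" "ball (complex_of_real (\<phi> x)) e2 \<subseteq> F ` ball (complex_of_real x) r1"
    using op unfolding open_contains_ball by metis
  obtain d where d: "d > 0" "\<And>w. dist w (\<phi> x) < d \<Longrightarrow> dist (\<psi> w) (\<psi> (\<phi> x)) < r1"
    using cont r1(1) unfolding continuous_at_eps_delta by blast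
  define r3 where "r3 = min e2 (min d e)"
  have r3: "r3 > 0" using e2 d e by (simp add: r3_def)
  have sub3: "ball (complex_of_real (\<phi> x)) r3 \<subseteq> F ` ball (complex_of_real x) r1"
    using e2(2) subset_ball[of r3 e2] by (auto simp: r3_def)
  show ?thesis
  proof (rule cextI[OF r3 holomorphic_on_subset[OF G(1) sub3]])
    fix w assume w: "\<bar>w - \<phi> x\<bar> < r3"
    have "dist (\<psi> w) x < r1" using d(2)[of w] w psx by (simp add: r3_def dist_real_def)
    then have inb: "complex_of_real (\<psi> w) \<in> ball (complex_of_real x) r1"
      using dist_of_real_ball[of "\<psi> w" x r1] by (simp add: dist_real_def)
    then have "\<bar>\<psi> w - x\<bar> < r" using r1(2) dist_of_real_ball[of "\<psi> w" x r] by blast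
    then have "F (complex_of_real (\<psi> w)) = complex_of_real (\<phi> (\<psi> w))" by (rule 1(3))
    also have "\<dots> = complex_of_real w" using inv[of w] w by (simp add: r3_def)
    finally have "G (complex_of_real w) = G (F (complex_of_real (\<psi> w)))" by simp
    also have "\<dots> = complex_of_real (\<psi> w)" by (rule G(2)[OF inb])
    finally show "G (complex_of_real w) = complex_of_real (\<psi> w)" .
  qed
qed



locale cs =
  fixes D :: nat and \<alpha> :: "real \<Rightarrow> nat \<Rightarrow> real"
  assumes D1: "D \<ge> 1" and id0: "\<forall>t\<in>{0<..<1}. \<alpha> t 0 = t"
    and ana: "\<forall>i<D. real_analytic_on {0<..<1} (\<lambda>t. \<alpha> t i)"
    and det0: "\<forall>p. (\<forall>k. p$k \<in> {0<..<1}) \<longrightarrow> det (jacobian (Tmap D \<alpha>) (at p)) = 0"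
begin

definition f' :: "nat \<Rightarrow> real \<Rightarrow> real" where "f' i t = deriv (\<lambda>t. \<alpha> t i) t"

lemma f'_eq: "f' i = deriv (\<lambda>t. \<alpha> t i)" by (rule ext) (simp add: f'_def)

lemma cext_a: "i < D \<Longrightarrow> t \<in> {0<..<1} \<Longrightarrow> cext (\<lambda>t. \<alpha> t i) t"
  using ana ra_imp_cext by blast

lemma der: "i < D \<Longrightarrow> t \<in> {0<..<1} \<Longrightarrow> ((\<lambda>t. \<alpha> t i) has_real_derivative f' i t) (at t)"
  unfolding f'_def by (rule cext_deriv_at[OF cext_a])

lemma cext_f': "i < D \<Longrightarrow> t \<in> {0<..<1} \<Longrightarrow> cext (f' i) t"
  unfolding f'_eq by (rule cext_deriv[OF cext_a])

lemma cont_f': "i < D \<Longrightarrow> t \<in> {0<..<1} \<Longrightarrow> isCont (f' i) t"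
  by (rule cext_isCont[OF cext_f'])

lemma f'0: assumes t: "t \<in> {0<..<1}" shows "f' 0 t = 1"
proof -
  have "((\<lambda>t. \<alpha> t 0) has_real_derivative 1) (at t)"
    by (rule has_field_derivative_transform_within_open[of "\<lambda>t. t" 1 t "{0<..<1}"])
       (use t id0 in auto)
  moreover have "((\<lambda>t. \<alpha> t 0) has_real_derivative f' 0 t) (at t)" using der[of 0 t] D1 t by simp
  ultimately show ?thesis using DERIV_unique by metis
qed

abbreviation "r1 \<equiv> R1 D \<alpha> f'"
abbreviation "r2 \<equiv> R2 D \<alpha> f'"

lemma detid:
  assumes "x \<in> {0<..<1}" "x' \<in> {0<..<1}" "y \<in> {0<..<1}" "y' \<in> {0<..<1}"
  shows "r2 x y * r1 x y' * r1 x' y * r2 x' y' = r1 x y * r2 x y' * r2 x' y * r1 x' y'"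
  by (rule det_identity[OF der det0 assms])

definition Fp :: "real \<Rightarrow> real \<Rightarrow> real" where "Fp s t = (\<Sum>i<D. f' i s * f' i t)"

lemma Fp_lower:
  assumes "s \<in> {0<..<1}" "t \<in> {0<..<1}"
  shows "Fp s t \<ge> 1 - (\<Sum>i<D. (f' i s - f' i t)^2) / 2"
proof -
  have sq: "(\<Sum>i<D. (f' i u)^2) \<ge> 1" if "u \<in> {0<..<1}" for u
  proof -
    have "(\<Sum>i<D. (f' i u)^2) \<ge> (\<Sum>i\<in>{0}. (f' i u)^2)"
      by (rule sum_mono2) (use D1 in auto)
    then show ?thesis using f'0[OF that] by simp
  qed
  have "Fp s t = ((\<Sum>i<D. (f' i s)^2) + (\<Sum>i<D. (f' i t)^2) - (\<Sum>i<D. (f' i s - f' i t)^2)) / 2"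
    unfolding Fp_def by (simp add: sum_subtractf[symmetric] sum.distrib[symmetric] sum_divide_distrib power2_eq_square algebra_simps)
  then show ?thesis using sq[OF assms(1)] sq[OF assms(2)] by simp
qed

lemma stepA: "\<exists>\<delta>>0. \<delta> \<le> 1/4 \<and> (\<forall>s t. \<bar>s - 1/2\<bar> < \<delta> \<longrightarrow> \<bar>t - 1/2\<bar> < \<delta> \<longrightarrow> Fp s t > 0)"
proof -
  define \<eta> :: real where "\<eta> = 1 / (2 * (real D + 1))"
  have \<eta>: "\<eta> > 0" by (simp add: \<eta>_def)
  have x0: "(1/2::real) \<in> {0<..<1}" by simp
  have "\<forall>i\<in>{..<D}. eventually (\<lambda>s. dist (f' i s) (f' i (1/2)) < \<eta>) (at (1/2))"
    using cont_f'[OF _ x0] \<eta> by (auto simp: isCont_def intro: tendstoD)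
  then have "eventually (\<lambda>s. \<forall>i\<in>{..<D}. dist (f' i s) (f' i (1/2)) < \<eta>) (at (1/2))"
    by (rule eventually_ball_finite[rotated]) simp
  then obtain d where d: "d > 0" "\<And>s. s \<noteq> 1/2 \<Longrightarrow> dist s (1/2) < d \<Longrightarrow> \<forall>i<D. dist (f' i s) (f' i (1/2)) < \<eta>"
    unfolding eventually_at by auto
  have close: "\<forall>i<D. \<bar>f' i s - f' i (1/2)\<bar> < \<eta>" if "\<bar>s - 1/2\<bar> < d" for s
  proof (cases "s = 1/2")
    case True then show ?thesis using \<eta> by (simp only: diff_self abs_zero) blast
  next
    case False then show ?thesis using d(2)[of s] that by (auto simp: dist_real_def)
  qed
  define \<delta> where "\<delta> = min d (1/4)"
  have "\<delta> > 0" "\<delta> \<le> 1/4" using d by (auto simp: \<delta>_def)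
  moreover have "Fp s t > 0" if s: "\<bar>s - 1/2\<bar> < \<delta>" and t: "\<bar>t - 1/2\<bar> < \<delta>" for s t
  proof -
    have s4: "\<bar>s - 1/2\<bar> < 1/4" "\<bar>t - 1/2\<bar> < 1/4" using s t by (simp_all add: \<delta>_def)
    have sin: "s \<in> {0<..<1}" "t \<in> {0<..<1}" using s4 unfolding abs_less_iff greaterThanLessThan_iff by (intro conjI; linarith)+
    have cs: "\<forall>i<D. \<bar>f' i s - f' i (1/2)\<bar> < \<eta>" "\<forall>i<D. \<bar>f' i t - f' i (1/2)\<bar> < \<eta>"
      using close s t by (auto simp: \<delta>_def)
    have "\<And>i. i < D \<Longrightarrow> (f' i s - f' i t)^2 \<le> (2*\<eta>)^2"
    proof -
      fix i assume i: "i < D"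
      have "\<bar>f' i s - f' i t\<bar> \<le> 2 * \<eta>" using cs i by fastforce
      then show "(f' i s - f' i t)^2 \<le> (2*\<eta>)^2"
        by (metis abs_ge_zero power2_abs power_mono)
    qed
    then have "(\<Sum>i<D. (f' i s - f' i t)^2) \<le> (\<Sum>i<D. (2*\<eta>)^2)" by (intro sum_mono) auto
    also have "\<dots> = real D * (2*\<eta>)^2" by simp
    also have "\<dots> = real D / (real D + 1)^2"
    proof -
      have "(2 * real D + 2)^2 = 4 * (real D + 1)^2" by (simp add: power2_eq_square algebra_simps)
      then show ?thesis by (simp add: \<eta>_def power_divide)
    qed
    also have "\<dots> < 1"
    proof -
      have "real D < (real D + 1)^2" by (simp add: power2_eq_square algebra_simps) (smt (verit) of_nat_0_le_iff mult_nonneg_nonneg)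
      then show ?thesis by (simp add: divide_less_eq)
    qed
    finally have "(\<Sum>i<D. (f' i s - f' i t)^2) < 1" .
    then show ?thesis using Fp_lower[OF sin] by linarith
  qed
  ultimately show ?thesis by blast
qed

end

locale cs2 = cs +
  fixes \<delta> :: real
  assumes \<delta>: "\<delta> > 0" "\<delta> \<le> 1/4"
    and Fp_pos: "\<And>s t. \<bar>s - 1/2\<bar> < \<delta> \<Longrightarrow> \<bar>t - 1/2\<bar> < \<delta> \<Longrightarrow> Fp s t > 0"
begin

abbreviation "U \<equiv> {1/2 - \<delta> <..< 1/2 + \<delta>}"

lemma U_iff: "s \<in> U \<longleftrightarrow> \<bar>s - 1/2\<bar> < \<delta>"
  by (auto simp: abs_less_iff)

lemma U_sub: "s \<in> U \<Longrightarrow> s \<in> {0<..<1}"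
  using \<delta> by auto

definition G :: "real \<Rightarrow> real \<Rightarrow> real" where "G c t = (\<Sum>i<D. f' i c * \<alpha> t i)"

lemma G_der: "t \<in> {0<..<1} \<Longrightarrow> (G c has_real_derivative Fp c t) (at t)"
  unfolding G_def[abs_def] Fp_def
  by (intro DERIV_sum DERIV_cmult der) auto

lemma G_incr:
  assumes c: "c \<in> U" and st: "s \<in> U" "t \<in> U" "s < t"
  shows "G c s < G c t"
proof (rule DERIV_pos_imp_increasing[OF st(3)])
  fix x assume "s \<le> x" "x \<le> t"
  then have x: "x \<in> U" using st by auto
  show "\<exists>y. (G c has_real_derivative y) (at x) \<and> y > 0"
    using G_der[OF U_sub[OF x]] Fp_pos c x U_iff by blast
qed

lemma r1_G: "r1 x y = 2 * (G x x - G x y)"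
  unfolding R1_def G_def by (simp add: sum_distrib_left sum_subtractf[symmetric] algebra_simps)

lemma r2_G: "r2 x y = -2 * (G y x - G y y)"
  unfolding R2_def G_def by (simp add: sum_distrib_left sum_subtractf[symmetric] algebra_simps)

lemma r_same: "r1 x x = 0" "r2 x x = 0"
  by (simp_all add: r1_G r2_G)

lemma sign_gt: "x \<in> U \<Longrightarrow> y \<in> U \<Longrightarrow> y < x \<Longrightarrow> r1 x y > 0 \<and> r2 x y < 0"
  using G_incr[of x y x] G_incr[of y y x] by (simp add: r1_G r2_G)

lemma sign_lt: "x \<in> U \<Longrightarrow> y \<in> U \<Longrightarrow> x < y \<Longrightarrow> r1 x y < 0 \<and> r2 x y > 0"
  using G_incr[of x x y] G_incr[of y x y] by (simp add: r1_G r2_G)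

definition "c0 = 1/2 - \<delta>/2"
definition "d0 = 1/2 - 3*\<delta>/4"
abbreviation "W \<equiv> {1/2 <..< 1/2 + \<delta>}"

lemma c0d0: "c0 \<in> U" "d0 \<in> U" "d0 < c0" using \<delta> by (auto simp: c0_def d0_def)
lemma W_U: "x \<in> W \<Longrightarrow> x \<in> U" using \<delta> by auto
lemma W_gt: "x \<in> W \<Longrightarrow> c0 < x \<and> d0 < x" using \<delta> by (auto simp: c0_def d0_def)

definition A :: "real \<Rightarrow> real" where "A x = - r1 x c0 / r2 x c0"
definition B :: "real \<Rightarrow> real" where "B y = r1 d0 y * r2 d0 c0 / (r2 d0 y * r1 d0 c0)"

lemma A_pos: assumes "x \<in> W" shows "A x > 0"
proof -
  have "c0 < x" using W_gt[OF assms] by simp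
  then have "r1 x c0 > 0" "r2 x c0 < 0" using sign_gt[OF W_U[OF assms] c0d0(1)] by auto
  then show ?thesis unfolding A_def using divide_pos_neg[of "r1 x c0" "r2 x c0"] by simp
qed

lemma ratio:
  assumes x: "x \<in> W" and y: "y \<in> W" and xy: "x \<noteq> y"
  shows "r1 x y / r2 x y = - A x * B y"
proof -
  have E: "r2 x y * r1 x c0 * r1 d0 y * r2 d0 c0 = r1 x y * r2 x c0 * r2 d0 y * r1 d0 c0"
    by (rule detid) (use U_sub W_U x y c0d0 in auto)
  have n1: "r2 x y \<noteq> 0"
    using xy sign_gt[OF W_U[OF x] W_U[OF y]] sign_lt[OF W_U[OF x] W_U[OF y]] by (cases "x < y") auto
  have n2: "r2 x c0 \<noteq> 0" using sign_gt[OF W_U[OF x] c0d0(1)] W_gt[OF x] by auto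
  have n3: "r2 d0 y \<noteq> 0" using sign_lt[OF c0d0(2) W_U[OF y]] W_gt[OF y] by auto
  have n4: "r1 d0 c0 \<noteq> 0" using sign_lt[OF c0d0(2) c0d0(1) c0d0(3)] by auto
  show ?thesis using E n1 n2 n3 n4 unfolding A_def B_def
    by (simp add: field_simps)
qed

lemma cext_r1c: "x \<in> {0<..<1} \<Longrightarrow> c \<in> {0<..<1} \<Longrightarrow> cext (\<lambda>x. r1 x c) x"
  unfolding R1_def
  apply (rule cext_sum)
  apply (rule cext_mult)
   apply (rule cext_mult)
    apply (rule cext_const)
   apply (rule cext_diff)
    apply (rule cext_a; simp)
   apply (rule cext_const)
  apply (rule cext_f'; simp)
  done

lemma cext_r2c: "x \<in> {0<..<1} \<Longrightarrow> c \<in> {0<..<1} \<Longrightarrow> cext (\<lambda>x. r2 x c) x"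
  unfolding R2_def
  apply (rule cext_sum)
  apply (rule cext_mult)
   apply (rule cext_mult)
    apply (rule cext_const)
   apply (rule cext_diff)
    apply (rule cext_a; simp)
   apply (rule cext_const)
  apply (rule cext_const)
  done

lemma cext_A: assumes x: "x \<in> W" shows "cext A x"
proof -
  have xi: "x \<in> {0<..<1}" "c0 \<in> {0<..<1}" using U_sub W_U x c0d0 by auto
  have "r2 x c0 \<noteq> 0" using sign_gt[OF W_U[OF x] c0d0(1)] W_gt[OF x] by auto
  then have "cext (\<lambda>x. r1 x c0 / r2 x c0) x"
    by (intro cext_divide cext_r1c cext_r2c xi)
  then have "cext (\<lambda>x. 0 - r1 x c0 / r2 x c0) x" by (intro cext_diff cext_const)
  then show ?thesis unfolding A_def[abs_def] by simp
qed

lemma lim_ratio: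
  assumes y: "y \<in> {0<..<1}"
  shows "((\<lambda>x. r1 x y / r2 x y) \<longlongrightarrow> -1) (at y)"
proof -
  have dq: "((\<lambda>x. (\<alpha> x i - \<alpha> y i) / (x - y)) \<longlongrightarrow> f' i y) (at y)" if "i < D" for i
    using der[OF that y] by (simp add: has_field_derivative_iff)
  have cf: "(f' i \<longlongrightarrow> f' i y) (at y)" if "i < D" for i
    using cont_f'[OF that y] by (simp add: isCont_def)
  define N where "N = (\<lambda>x. \<Sum>i<D. 2 * ((\<alpha> x i - \<alpha> y i) / (x - y)) * f' i x)"
  define M where "M = (\<lambda>x. \<Sum>i<D. - 2 * ((\<alpha> x i - \<alpha> y i) / (x - y)) * f' i y)"
  have LN: "(N \<longlongrightarrow> (\<Sum>i<D. 2 * f' i y * f' i y)) (at y)"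
    unfolding N_def by (intro tendsto_sum tendsto_mult tendsto_const dq cf) auto
  have LM: "(M \<longlongrightarrow> (\<Sum>i<D. - 2 * f' i y * f' i y)) (at y)"
    unfolding M_def by (intro tendsto_sum tendsto_mult tendsto_const dq) auto
  have S1: "(\<Sum>i<D. f' i y * f' i y) \<ge> 1"
  proof -
    have "(\<Sum>i<D. f' i y * f' i y) \<ge> (\<Sum>i\<in>{0}. f' i y * f' i y)"
      by (rule sum_mono2) (use D1 in auto)
    then show ?thesis using f'0[OF y] by simp
  qed
  have e1: "(\<Sum>i<D. 2 * f' i y * f' i y) = 2 * (\<Sum>i<D. f' i y * f' i y)"
    by (simp add: sum_distrib_left mult.assoc)
  have e2: "(\<Sum>i<D. - 2 * f' i y * f' i y) = - 2 * (\<Sum>i<D. f' i y * f' i y)"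
    by (simp add: sum_distrib_left mult.assoc)
  have L: "((\<lambda>x. N x / M x) \<longlongrightarrow> -1) (at y)"
    using tendsto_divide[OF LN LM] S1 unfolding e1 e2 by simp
  have ev: "eventually (\<lambda>x. N x / M x = r1 x y / r2 x y) (at y)"
    unfolding eventually_at
  proof (intro exI[of _ 1] conjI allI ballI impI)
    fix x assume "x \<noteq> y \<and> dist x y < 1"
    then have xy: "x - y \<noteq> 0" by simp
    have "r1 x y = (x - y) * N x"
      unfolding R1_def N_def sum_distrib_left by (rule sum.cong) (use xy in auto)
    moreover have "r2 x y = (x - y) * M x"
      unfolding R2_def M_def sum_distrib_left by (rule sum.cong) (use xy in auto)
    ultimately show "N x / M x = r1 x y / r2 x y" using xy by simp
  qed simp
  show ?thesis by (rule Lim_transform_eventually[OF L ev])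
qed

lemma AB: assumes y: "y \<in> W" shows "A y * B y = 1"
proof -
  have yi: "y \<in> {0<..<1}" using U_sub W_U y by auto
  have "isCont A y" by (rule cext_isCont[OF cext_A[OF y]])
  then have L1: "((\<lambda>x. - A x * B y) \<longlongrightarrow> - A y * B y) (at y)"
    unfolding isCont_def by (intro tendsto_intros)
  have "eventually (\<lambda>x. x \<in> W - {y}) (at y)"
    by (rule eventually_at_in_open) (use y in auto)
  then have ev: "eventually (\<lambda>x. - A x * B y = r1 x y / r2 x y) (at y)"
    by eventually_elim (use ratio y in auto)
  have "((\<lambda>x. r1 x y / r2 x y) \<longlongrightarrow> - A y * B y) (at y)"
    by (rule Lim_transform_eventually[OF L1 ev])
  then have "- A y * B y = -1" using tendsto_unique[OF trivial_limit_at _ lim_ratio[OF yi]] by blast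
  then show ?thesis by simp
qed

lemma P: assumes x: "x \<in> W" and y: "y \<in> W" shows "r1 x y * A y + A x * r2 x y = 0"
proof (cases "x = y")
  case True then show ?thesis by (simp add: r_same)
next
  case False
  have n1: "r2 x y \<noteq> 0"
    using False sign_gt[OF W_U[OF x] W_U[OF y]] sign_lt[OF W_U[OF x] W_U[OF y]] by (cases "x < y") auto
  have "r1 x y = - A x * B y * r2 x y" using ratio[OF x y False] n1 by (simp add: field_simps)
  moreover have "B y * A y = 1" using AB[OF y] by (simp only: mult.commute)
  ultimately have "r1 x y * A y = - A x * r2 x y" by (simp add: algebra_simps)
  then show ?thesis by simp
qed

definition "p0 = 1/2 + \<delta>/4"
definition "q0 = 1/2 + 3*\<delta>/4"

lemma pq: "p0 < q0" "{p0..q0} \<subseteq> W" using \<delta> by (auto simp: p0_def q0_def)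

definition \<phi> :: "real \<Rightarrow> real" where "\<phi> x = integral {p0..x} A"

lemma A_cont_on: "continuous_on {p0..q0} A"
  by (rule continuous_at_imp_continuous_on) (use cext_isCont cext_A pq in blast)

lemma phi_der_within: "x \<in> {p0..q0} \<Longrightarrow> (\<phi> has_real_derivative A x) (at x within {p0..q0})"
  unfolding \<phi>_def[abs_def] by (rule integral_has_real_derivative[OF A_cont_on])

lemma phi_der: "p0 < x \<Longrightarrow> x < q0 \<Longrightarrow> (\<phi> has_real_derivative A x) (at x)"
  using phi_der_within[of x] at_within_Icc_at[of p0 x q0] by simp

lemma phi_cont: "continuous_on {p0..q0} \<phi>"
  by (rule DERIV_continuous_on[OF phi_der_within])

lemma phi_incr: assumes "p0 \<le> s" "s < t" "t \<le> q0" shows "\<phi> s < \<phi> t"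
proof (rule DERIV_pos_imp_increasing_open[OF assms(2)])
  fix x assume "s < x" "x < t"
  then have x: "p0 < x" "x < q0" using assms by auto
  then have "x \<in> {p0..q0}" by auto
  with x have "p0 < x" "x < q0" "x \<in> W" using subsetD[OF pq(2)] by auto
  then show "\<exists>y. (\<phi> has_real_derivative y) (at x) \<and> y > 0" using phi_der A_pos by blast
next
  show "continuous_on {s..t} \<phi>" by (rule continuous_on_subset[OF phi_cont]) (use assms in auto)
qed

lemma phi_mono: "p0 \<le> s \<Longrightarrow> s \<le> t \<Longrightarrow> t \<le> q0 \<Longrightarrow> \<phi> s \<le> \<phi> t"
  using phi_incr by (cases "s = t") (auto intro: less_imp_le)

lemma phi_inj: "inj_on \<phi> {p0..q0}"
  unfolding inj_on_def
  by (metis atLeastAtMost_iff linorder_neqE_linordered_idom order_less_irrefl phi_incr)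

lemma phi_img: "\<phi> ` {p0..q0} = {\<phi> p0..\<phi> q0}"
proof
  show "\<phi> ` {p0..q0} \<subseteq> {\<phi> p0..\<phi> q0}" using phi_mono by auto
  show "{\<phi> p0..\<phi> q0} \<subseteq> \<phi> ` {p0..q0}"
  proof
    fix w assume "w \<in> {\<phi> p0..\<phi> q0}"
    then obtain x where "p0 \<le> x" "x \<le> q0" "\<phi> x = w"
      using IVT'[of \<phi> p0 w q0] phi_cont pq by auto
    then show "w \<in> \<phi> ` {p0..q0}" by auto
  qed
qed

definition \<psi> :: "real \<Rightarrow> real" where "\<psi> = inv_into {p0..q0} \<phi>"

lemma psi_in: "w \<in> {\<phi> p0..\<phi> q0} \<Longrightarrow> \<psi> w \<in> {p0..q0}"
  unfolding \<psi>_def using inv_into_into phi_img by metis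

lemma phi_psi: "w \<in> {\<phi> p0..\<phi> q0} \<Longrightarrow> \<phi> (\<psi> w) = w"
  unfolding \<psi>_def using f_inv_into_f phi_img by metis

lemma psi_phi: "x \<in> {p0..q0} \<Longrightarrow> \<psi> (\<phi> x) = x"
  unfolding \<psi>_def using inv_into_f_f phi_inj by metis

lemma psi_cont_on: "continuous_on {\<phi> p0..\<phi> q0} \<psi>"
  using continuous_on_inv[OF phi_cont compact_Icc] psi_phi phi_img by auto

lemma psi_isCont: assumes "\<phi> p0 < w" "w < \<phi> q0" shows "isCont \<psi> w"
proof -
  have "w \<in> {\<phi> p0..\<phi> q0}" using assms by auto
  then have "continuous (at w within {\<phi> p0..\<phi> q0}) \<psi>"
    using psi_cont_on by (simp add: continuous_on_eq_continuous_within)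
  then show ?thesis using at_within_Icc_at[of "\<phi> p0" w "\<phi> q0"] assms by simp
qed

lemma psi_open: assumes "\<phi> p0 < w" "w < \<phi> q0" shows "p0 < \<psi> w \<and> \<psi> w < q0"
proof -
  have w: "w \<in> {\<phi> p0..\<phi> q0}" using assms by auto
  have "\<psi> w \<noteq> p0" using phi_psi[OF w] assms by auto
  moreover have "\<psi> w \<noteq> q0" using phi_psi[OF w] assms by auto
  ultimately show ?thesis using psi_in[OF w] by auto
qed

lemma psi_incr: assumes "\<phi> p0 \<le> w1" "w1 < w2" "w2 \<le> \<phi> q0" shows "\<psi> w1 < \<psi> w2"
proof (rule ccontr)
  assume "\<not> \<psi> w1 < \<psi> w2"
  then have "\<psi> w2 \<le> \<psi> w1" by simp
  moreover have "\<psi> w1 \<in> {p0..q0}" "\<psi> w2 \<in> {p0..q0}" using psi_in assms by auto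
  ultimately have "\<phi> (\<psi> w2) \<le> \<phi> (\<psi> w1)" using phi_mono by auto
  then show False using phi_psi[of w1] phi_psi[of w2] assms by auto
qed

lemma psi_der: assumes "\<phi> p0 < w" "w < \<phi> q0" shows "(\<psi> has_real_derivative inverse (A (\<psi> w))) (at w)"
proof (rule DERIV_inverse_function[OF _ _ assms])
  show "(\<phi> has_real_derivative A (\<psi> w)) (at (\<psi> w))" using phi_der psi_open[OF assms] by blast
  show "A (\<psi> w) \<noteq> 0" using A_pos psi_open[OF assms] pq by (metis atLeastAtMost_iff less_irrefl subsetD less_imp_le)
  show "\<phi> (\<psi> y) = y" if "\<phi> p0 < y" "y < \<phi> q0" for y using phi_psi that by auto
  show "isCont \<psi> w" by (rule psi_isCont[OF assms])
qed

lemma rho_comp_der: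
  assumes X: "(X has_real_derivative X') (at t)" and Y: "(Y has_real_derivative Y') (at t)"
    and Xi: "X t \<in> {0<..<1}" and Yi: "Y t \<in> {0<..<1}"
  shows "((\<lambda>t. rho D \<alpha> (X t) (Y t)) has_real_derivative (r1 (X t) (Y t) * X' + r2 (X t) (Y t) * Y')) (at t)"
proof -
  have "((\<lambda>t. \<Sum>i<D. (\<alpha> (X t) i - \<alpha> (Y t) i)^2) has_real_derivative
      (\<Sum>i<D. 2 * (\<alpha> (X t) i - \<alpha> (Y t) i) * (f' i (X t) * X' - f' i (Y t) * Y'))) (at t)"
  proof (rule DERIV_sum)
    fix i assume "i \<in> {..<D}"
    then have i: "i < D" by simp
    have a: "((\<lambda>t. \<alpha> (X t) i) has_real_derivative f' i (X t) * X') (at t)"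
      using DERIV_chain2[OF der[OF i Xi] X] .
    have b: "((\<lambda>t. \<alpha> (Y t) i) has_real_derivative f' i (Y t) * Y') (at t)"
      using DERIV_chain2[OF der[OF i Yi] Y] .
    show "((\<lambda>t. (\<alpha> (X t) i - \<alpha> (Y t) i)^2) has_real_derivative
      2 * (\<alpha> (X t) i - \<alpha> (Y t) i) * (f' i (X t) * X' - f' i (Y t) * Y')) (at t)"
      using DERIV_power[OF DERIV_diff[OF a b], of 2] by (simp add: algebra_simps)
  qed
  moreover have "(\<Sum>i<D. 2 * (\<alpha> (X t) i - \<alpha> (Y t) i) * (f' i (X t) * X' - f' i (Y t) * Y'))
      = r1 (X t) (Y t) * X' + r2 (X t) (Y t) * Y'"
    unfolding R1_def R2_def sum_distrib_right sum.distrib[symmetric]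
    by (rule sum.cong) (auto simp: algebra_simps)
  ultimately show ?thesis unfolding rho_def by simp
qed

definition "m0 = (p0 + q0) / 2"
definition "v0 = \<phi> m0"
definition "\<epsilon> = min (v0 - \<phi> p0) (\<phi> q0 - v0) / 2"
definition "a1 = \<psi> (v0 - \<epsilon>)"
definition "b1 = \<psi> (v0 + \<epsilon>)"
definition h :: "real \<Rightarrow> real" where "h w = rho D \<alpha> (\<psi> (w + v0)) m0"

lemma m0: "p0 < m0" "m0 < q0" using pq by (auto simp: m0_def)
lemma v0: "\<phi> p0 < v0" "v0 < \<phi> q0" using phi_incr m0 by (auto simp: v0_def)
lemma eps: "\<epsilon> > 0" "\<phi> p0 \<le> v0 - 2*\<epsilon>" "v0 + 2*\<epsilon> \<le> \<phi> q0" using v0 by (auto simp: \<epsilon>_def)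
lemma psi_v0: "\<psi> v0 = m0" unfolding v0_def by (rule psi_phi) (use m0 in auto)

lemma ab1: "p0 < a1" "a1 < b1" "b1 < q0" "\<phi> a1 = v0 - \<epsilon>" "\<phi> b1 = v0 + \<epsilon>"
proof -
  have 1: "\<phi> p0 < v0 - \<epsilon>" "v0 - \<epsilon> < \<phi> q0" "\<phi> p0 < v0 + \<epsilon>" "v0 + \<epsilon> < \<phi> q0" using eps by linarith+
  show "p0 < a1" using psi_open[OF 1(1,2)] by (simp add: a1_def)
  show "b1 < q0" using psi_open[OF 1(3,4)] by (simp add: b1_def)
  show "a1 < b1" unfolding a1_def b1_def by (rule psi_incr) (use 1 eps in auto)
  show "\<phi> a1 = v0 - \<epsilon>" unfolding a1_def by (rule phi_psi) (use 1 in auto)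
  show "\<phi> b1 = v0 + \<epsilon>" unfolding b1_def by (rule phi_psi) (use 1 in auto)
qed

lemma in_I: assumes "x \<in> {a1<..<b1}"
  shows "p0 < x" "x < q0" "v0 - \<epsilon> < \<phi> x" "\<phi> x < v0 + \<epsilon>"
proof -
  show "p0 < x" "x < q0" using assms ab1 by auto
  show "v0 - \<epsilon> < \<phi> x" using phi_incr[of a1 x] assms ab1 by auto
  show "\<phi> x < v0 + \<epsilon>" using phi_incr[of x b1] assms ab1 by auto
qed

lemma pq_W: "p0 < x \<Longrightarrow> x < q0 \<Longrightarrow> x \<in> W" using \<delta> by (auto simp: p0_def q0_def)
lemma pq_01: "p0 < x \<Longrightarrow> x < q0 \<Longrightarrow> x \<in> {0<..<1}" using pq_W W_U U_sub by blast

lemma diag: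
  assumes x: "x \<in> {a1<..<b1}" and y: "y \<in> {a1<..<b1}"
  shows "rho D \<alpha> x y = h (\<phi> x - \<phi> y)"
proof -
  define J where "J = {\<phi> p0 - \<phi> x <..< \<phi> q0 - \<phi> x} \<inter> {\<phi> p0 - \<phi> y <..< \<phi> q0 - \<phi> y}"
  define g where "g = (\<lambda>t. rho D \<alpha> (\<psi> (\<phi> x + t)) (\<psi> (\<phi> y + t)))"
  have gd: "(g has_derivative (\<lambda>h. 0)) (at t within J)" if t: "t \<in> J" for t
  proof -
    have wx: "\<phi> p0 < \<phi> x + t" "\<phi> x + t < \<phi> q0" and wy: "\<phi> p0 < \<phi> y + t" "\<phi> y + t < \<phi> q0"
      using t by (auto simp: J_def)
    have one: "\<And>c. ((\<lambda>t. c + t) has_real_derivative 1) (at t)"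
      by (auto intro!: derivative_eq_intros)
    have Xd: "((\<lambda>t. \<psi> (\<phi> x + t)) has_real_derivative inverse (A (\<psi> (\<phi> x + t)))) (at t)"
      using DERIV_chain2[OF psi_der[OF wx] one] by simp
    have Yd: "((\<lambda>t. \<psi> (\<phi> y + t)) has_real_derivative inverse (A (\<psi> (\<phi> y + t)))) (at t)"
      using DERIV_chain2[OF psi_der[OF wy] one] by simp
    define X where "X = \<psi> (\<phi> x + t)"
    define Y where "Y = \<psi> (\<phi> y + t)"
    have XW: "X \<in> W" "X \<in> {0<..<1}" using psi_open[OF wx] pq_W pq_01 by (auto simp: X_def)
    have YW: "Y \<in> W" "Y \<in> {0<..<1}" using psi_open[OF wy] pq_W pq_01 by (auto simp: Y_def)
    have "(g has_real_derivative (r1 X Y * inverse (A X) + r2 X Y * inverse (A Y))) (at t)"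
      unfolding g_def X_def Y_def by (rule rho_comp_der[OF Xd Yd]) (use XW YW in \<open>auto simp: X_def Y_def\<close>)
    moreover have "r1 X Y * inverse (A X) + r2 X Y * inverse (A Y) = 0"
    proof -
      have "A X > 0" "A Y > 0" using A_pos XW YW by auto
      then have "r1 X Y * inverse (A X) + r2 X Y * inverse (A Y) = (r1 X Y * A Y + A X * r2 X Y) / (A X * A Y)"
        by (simp add: field_simps)
      then show ?thesis using P[OF XW(1) YW(1)] by simp
    qed
    ultimately have "(g has_real_derivative 0) (at t within J)" by (simp add: has_field_derivative_at_within)
    moreover have "(*) (0::real) = (\<lambda>h. 0)" by auto
    ultimately show ?thesis by (simp add: has_field_derivative_def)
  qed
  have cJ: "convex J" unfolding J_def by (intro convex_Int convex_real_interval)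
  obtain c where c: "\<And>t. t \<in> J \<Longrightarrow> g t = c"
    using has_derivative_zero_constant[OF cJ gd] by blast
  have ix: "v0 - \<epsilon> < \<phi> x" "\<phi> x < v0 + \<epsilon>" using in_I(3,4)[OF x] by auto
  have iy: "v0 - \<epsilon> < \<phi> y" "\<phi> y < v0 + \<epsilon>" using in_I(3,4)[OF y] by auto
  have "0 \<in> J" using ix iy eps unfolding J_def by auto
  moreover have "v0 - \<phi> y \<in> J" using ix iy eps v0 unfolding J_def by auto
  ultimately have "g 0 = g (v0 - \<phi> y)" using c by metis
  moreover have "g 0 = rho D \<alpha> x y"
    unfolding g_def using psi_phi[of x] psi_phi[of y] in_I(1,2)[OF x] in_I(1,2)[OF y] by simp
  moreover have "g (v0 - \<phi> y) = h (\<phi> x - \<phi> y)"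
    unfolding g_def h_def by (simp add: psi_v0 algebra_simps)
  ultimately show ?thesis by simp
qed

lemma cext_phi: "p0 < x \<Longrightarrow> x < q0 \<Longrightarrow> cext \<phi> x"
  by (rule cext_primitive[of p0 x q0 \<phi> A]) (auto intro: phi_der cext_A pq_W)

lemma cext_psi: assumes w: "\<phi> p0 < w" "w < \<phi> q0" shows "cext \<psi> w"
proof -
  define x1 where "x1 = \<psi> w"
  have x1: "p0 < x1" "x1 < q0" using psi_open[OF w] by (auto simp: x1_def)
  have px1: "\<phi> x1 = w" unfolding x1_def by (rule phi_psi) (use w in auto)
  have "deriv \<phi> x1 = A x1" by (rule DERIV_imp_deriv[OF phi_der[OF x1]])
  then have dnz: "deriv \<phi> x1 \<noteq> 0" using A_pos[OF pq_W[OF x1]] by simp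
  define e where "e = min (w - \<phi> p0) (\<phi> q0 - w)"
  have e: "e > 0" using w by (simp add: e_def)
  have "cext \<psi> (\<phi> x1)"
  proof (rule cext_inverse[OF cext_phi[OF x1] dnz e])
    show "\<phi> (\<psi> w') = w'" if "\<bar>w' - \<phi> x1\<bar> < e" for w'
      by (rule phi_psi) (use that px1 in \<open>auto simp: e_def abs_less_iff\<close>)
    show "isCont \<psi> (\<phi> x1)" using psi_isCont w px1 by simp
    show "\<psi> (\<phi> x1) = x1" by (rule psi_phi) (use x1 in auto)
  qed
  then show ?thesis using px1 by simp
qed

lemma cext_rho_m: "z \<in> {0<..<1} \<Longrightarrow> cext (\<lambda>z. rho D \<alpha> z m0) z"
  unfolding rho_def power2_eq_square
  apply (rule cext_sum)
  apply (rule cext_mult)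
   apply (rule cext_diff)
    apply (rule cext_a; simp)
   apply (rule cext_const)
  apply (rule cext_diff)
   apply (rule cext_a; simp)
  apply (rule cext_const)
  done

lemma cext_h: assumes "\<phi> p0 < w + v0" "w + v0 < \<phi> q0" shows "cext h w"
proof -
  have c1: "cext (\<lambda>w. w + v0) w" by (intro cext_add cext_id cext_const)
  have c2: "cext (\<lambda>w. \<psi> (w + v0)) w"
    by (rule cext_compose[of \<psi> "\<lambda>w. w + v0", OF _ c1]) (use cext_psi assms in simp)
  have "\<psi> (w + v0) \<in> {0<..<1}" using psi_open[OF assms] pq_01 by blast
  then have c3: "cext (\<lambda>w. rho D \<alpha> (\<psi> (w + v0)) m0) w"
    using cext_compose[of "\<lambda>z. rho D \<alpha> z m0" "\<lambda>w. \<psi> (w + v0)", OF _ c2] cext_rho_m by simp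
  then show ?thesis unfolding h_def[abs_def] .
qed

lemma h_mono:
  assumes u: "0 < u1" "u1 < u2" "u2 + v0 < \<phi> q0"
  shows "h u1 < h u2"
proof -
  have w1: "\<phi> p0 < u1 + v0" "u1 + v0 < \<phi> q0" using u v0 by auto
  have w2: "\<phi> p0 < u2 + v0" "u2 + v0 < \<phi> q0" using u v0 by auto
  define X1 where "X1 = \<psi> (u1 + v0)"
  define X2 where "X2 = \<psi> (u2 + v0)"
  have "\<psi> v0 < X1" unfolding X1_def by (rule psi_incr) (use u v0 in auto)
  then have mX1: "m0 < X1" by (simp add: psi_v0)
  have X12: "X1 < X2" unfolding X1_def X2_def by (rule psi_incr) (use u v0 in auto)
  have X2q: "X2 < q0" using psi_open[OF w2] by (simp add: X2_def)
  have m0W: "m0 \<in> U" using m0 pq_W W_U by blast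
  have "rho D \<alpha> X1 m0 < rho D \<alpha> X2 m0"
  proof (rule DERIV_pos_imp_increasing[OF X12])
    fix s assume s: "X1 \<le> s" "s \<le> X2"
    then have s': "p0 < s" "s < q0" "m0 < s" using mX1 X2q m0 by auto
    have sU: "s \<in> U" using pq_W[OF s'(1,2)] W_U by blast
    have s01: "s \<in> {0<..<1}" "m0 \<in> {0<..<1}" using pq_01[OF s'(1,2)] pq_01[OF m0] by auto
    have "((\<lambda>s. rho D \<alpha> s m0) has_real_derivative (r1 s m0 * 1 + r2 s m0 * 0)) (at s)"
      by (rule rho_comp_der[of "\<lambda>s. s" 1 s "\<lambda>s. m0" 0]) (use s01 in \<open>auto intro!: derivative_eq_intros\<close>)
    moreover have "r1 s m0 > 0" using sign_gt[OF sU m0W s'(3)] by simp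
    ultimately show "\<exists>y. ((\<lambda>s. rho D \<alpha> s m0) has_real_derivative y) (at s) \<and> y > 0" by auto
  qed
  then show ?thesis by (simp add: h_def X1_def X2_def)
qed

lemma final:
  "\<exists>a b \<phi> h. 0 \<le> a \<and> a < b \<and> b \<le> 1 \<and>
     real_analytic_on {a<..<b} \<phi> \<and> inj_on \<phi> {a<..<b} \<and>
     real_analytic_on {\<phi> x - \<phi> y | x y. x \<in> {a<..<b} \<and> y \<in> {a<..<b}} h \<and>
     inj_on h {u \<in> {\<phi> x - \<phi> y | x y. x \<in> {a<..<b} \<and> y \<in> {a<..<b}}. 0 < u} \<and>
     (\<forall>x\<in>{a<..<b}. \<forall>y\<in>{a<..<b}. rho D \<alpha> x y = h (\<phi> x - \<phi> y))"
proof (intro exI conjI)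
  show "0 \<le> a1" using ab1 \<delta> by (simp add: p0_def)
  show "a1 < b1" by (rule ab1)
  show "b1 \<le> 1" using ab1 \<delta> by (simp add: q0_def)
  show "real_analytic_on {a1<..<b1} \<phi>"
    by (rule cext_imp_ra) (use cext_phi ab1 in auto)
  show "inj_on \<phi> {a1<..<b1}" by (rule inj_on_subset[OF phi_inj]) (use ab1 in auto)
  define S where "S = {\<phi> x - \<phi> y | x y. x \<in> {a1<..<b1} \<and> y \<in> {a1<..<b1}}"
  have Sb: "\<phi> p0 < w + v0 \<and> w + v0 < \<phi> q0 \<and> w + v0 < v0 + 2 * \<epsilon>" if wS: "w \<in> S" for w
  proof -
    obtain x y where xy: "w = \<phi> x - \<phi> y" "x \<in> {a1<..<b1}" "y \<in> {a1<..<b1}" using wS unfolding S_def by blast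
    show ?thesis using in_I(3,4)[OF xy(2)] in_I(3,4)[OF xy(3)] eps xy(1) by auto
  qed
  show "real_analytic_on {\<phi> x - \<phi> y | x y. x \<in> {a1<..<b1} \<and> y \<in> {a1<..<b1}} h"
    unfolding S_def[symmetric] by (rule cext_imp_ra) (use Sb cext_h in blast)
  show "inj_on h {u \<in> {\<phi> x - \<phi> y | x y. x \<in> {a1<..<b1} \<and> y \<in> {a1<..<b1}}. 0 < u}"
    unfolding S_def[symmetric] inj_on_def
  proof (intro ballI impI)
    fix u1 u2 assume u1: "u1 \<in> {u \<in> S. 0 < u}" and u2: "u2 \<in> {u \<in> S. 0 < u}" and eq: "h u1 = h u2"
    show "u1 = u2"
    proof (rule ccontr)
      assume "u1 \<noteq> u2"
      then consider "u1 < u2" | "u2 < u1" by linarith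
      then show False
      proof cases
        case 1 then show False using h_mono[of u1 u2] u1 u2 Sb eq by auto
      next
        case 2 then show False using h_mono[of u2 u1] u1 u2 Sb eq by auto
      qed
    qed
  qed
  show "\<forall>x\<in>{a1<..<b1}. \<forall>y\<in>{a1<..<b1}. rho D \<alpha> x y = h (\<phi> x - \<phi> y)"
    using diag by blast
qed

end

theorem lemma2p5:
  fixes D :: nat and \<gamma> :: "(nat \<Rightarrow> real) set" and \<alpha> :: "real \<Rightarrow> nat \<Rightarrow> real"
  assumes "D \<ge> 1"
    and "real_alg_curve D \<gamma>"
    and "\<forall>t\<in>{0<..<1}. \<alpha> t \<in> \<gamma>"
    and "\<forall>t\<in>{0<..<1}. \<alpha> t 0 = t"
    and "\<forall>i<D. real_analytic_on {0<..<1} (\<lambda>t. \<alpha> t i)"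
    and "openin (top_of_set \<gamma>) (\<alpha> ` {0<..<1})"
    and "\<forall>p. (\<forall>k. p$k \<in> {0<..<1}) \<longrightarrow> det (jacobian (Tmap D \<alpha>) (at p)) = 0"
  shows "\<exists>a b \<phi> h. 0 \<le> a \<and> a < b \<and> b \<le> 1 \<and>
     real_analytic_on {a<..<b} \<phi> \<and> inj_on \<phi> {a<..<b} \<and>
     real_analytic_on {\<phi> x - \<phi> y | x y. x \<in> {a<..<b} \<and> y \<in> {a<..<b}} h \<and>
     inj_on h {u \<in> {\<phi> x - \<phi> y | x y. x \<in> {a<..<b} \<and> y \<in> {a<..<b}}. 0 < u} \<and>
     (\<forall>x\<in>{a<..<b}. \<forall>y\<in>{a<..<b}. rho D \<alpha> x y = h (\<phi> x - \<phi> y))"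
proof -
  interpret cs D \<alpha>
    by unfold_locales (use assms in auto)
  obtain \<delta> where d: "\<delta> > 0" "\<delta> \<le> 1/4"
    and F: "\<forall>s t. \<bar>s - 1/2\<bar> < \<delta> \<longrightarrow> \<bar>t - 1/2\<bar> < \<delta> \<longrightarrow> Fp s t > 0"
    using stepA by blast
  interpret cs2 D \<alpha> \<delta>
    by unfold_locales (use d F in auto)
  show ?thesis by (rule final)
qed

end
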